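(* If $(a,b)\in R_3$, then $J(a,b)\ge \frac{9+8\sqrt{10}}{215}$.
   Context: For $(a,b)\in\mathbb R^2$ define $f_{a,b}(x_1,x_2)=[b+a(x_1+x_2)+x_1x_2](2-x_1-x_2)$. Let $X_1=\{(x_1,x_2):-1\le x_1\le 0,\ -x_1\le x_2\le 1\}$ and $X_2=\{(x_1,x_2):-1\le x_1\le0,\ x_1\le x_2\le -x_1\}$. Let $\chi_{a,b}=\max_{X_1\cup X_2}f_{a,b}$, $m_{a,b}=\min_{X_1\cup X_2}f_{a,b}$, $R=\{(a,b)\in\mathbb R^2: m_{a,b}>0\}$, and for $(a,b)\in R$ let $J(a,b)=\frac{\chi_{a,b}-m_{a,b}}{\chi_{a,b}+m_{a,b}}$. Whenever $(1-2a)^2\ge3(b-2a)$ let $t_-=\frac{2a-1-\sqrt{(1-2a)^2-3(b-2a)}}{3/2}$. Let $R_3=\{(a,b)\in R:(1-2a)^2\ge3(b-2a)>0,\ t_-\in[0,2]\}$. *)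

theory Defs
  imports Complex_Main
begin

definition fab :: "real \<Rightarrow> real \<Rightarrow> real \<times> real \<Rightarrow> real" where
  "fab a b x = (b + a * (fst x + snd x) + fst x * snd x) * (2 - fst x - snd x)"

definition X1 :: "(real \<times> real) set" where
  "X1 = {(x1, x2). -1 \<le> x1 \<and> x1 \<le> 0 \<and> -x1 \<le> x2 \<and> x2 \<le> 1}"

definition X2 :: "(real \<times> real) set" where
  "X2 = {(x1, x2). -1 \<le> x1 \<and> x1 \<le> 0 \<and> x1 \<le> x2 \<and> x2 \<le> -x1}"

text \<open>Maximum and minimum over the compact set X1 \<union> X2 (attained, since f is continuous).\<close>
definition chi :: "real \<Rightarrow> real \<Rightarrow> real" where
  "chi a b = (SUP x\<in>X1 \<union> X2. fab a b x)"

definition mab :: "real \<Rightarrow> real \<Rightarrow> real" where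
  "mab a b = (INF x\<in>X1 \<union> X2. fab a b x)"

definition Rset :: "(real \<times> real) set" where
  "Rset = {(a, b). mab a b > 0}"

definition J :: "real \<Rightarrow> real \<Rightarrow> real" where
  "J a b = (chi a b - mab a b) / (chi a b + mab a b)"

definition tminus :: "real \<Rightarrow> real \<Rightarrow> real" where
  "tminus a b = (2*a - 1 - sqrt ((1 - 2*a)^2 - 3*(b - 2*a))) / (3/2)"

definition R3 :: "(real \<times> real) set" where
  "R3 = {(a, b). (a, b) \<in> Rset \<and> (1 - 2*a)^2 \<ge> 3*(b - 2*a) \<and> 3*(b - 2*a) > 0
               \<and> 0 \<le> tminus a b \<and> tminus a b \<le> 2}"

end

theory Submission
  imports Defs
begin

lemma dom_bounds:
  assumes "x \<in> X1 \<union> X2"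
  shows "-1 \<le> fst x \<and> fst x \<le> 0 \<and> fst x \<le> snd x \<and> snd x \<le> 1"
  using assms unfolding X1_def X2_def by auto

lemma fab_abs_bound:
  assumes "x \<in> X1 \<union> X2"
  shows "\<bar>fab a b x\<bar> \<le> (\<bar>b\<bar> + 2*\<bar>a\<bar> + 1) * 4"
proof -
  obtain u v where x: "x = (u, v)" by (cases x)
  have h: "-1 \<le> u" "u \<le> 0" "u \<le> v" "v \<le> 1" using dom_bounds[OF assms] x by auto
  have s: "\<bar>u + v\<bar> \<le> 2" using h by auto
  have p: "\<bar>u * v\<bar> \<le> 1"
  proof -
    have "\<bar>u\<bar> \<le> 1" "\<bar>v\<bar> \<le> 1" using h by auto
    then have "\<bar>u\<bar> * \<bar>v\<bar> \<le> 1 * 1" by (intro mult_mono) auto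
    then show ?thesis by (simp add: abs_mult)
  qed
  have as: "\<bar>a * (u + v)\<bar> \<le> 2 * \<bar>a\<bar>"
    using s by (simp add: abs_mult mult_left_mono mult.commute)
  have e1: "\<bar>b + a * (u + v) + u * v\<bar> \<le> \<bar>b\<bar> + 2*\<bar>a\<bar> + 1"
    using as p abs_triangle_ineq[of "b + a*(u+v)" "u*v"] abs_triangle_ineq[of b "a*(u+v)"] by linarith
  have e2: "\<bar>2 - u - v\<bar> \<le> 4" using h by auto
  have "\<bar>(b + a * (u + v) + u * v) * (2 - u - v)\<bar> \<le> (\<bar>b\<bar> + 2*\<bar>a\<bar> + 1) * 4"
    unfolding abs_mult by (intro mult_mono e1 e2) auto
  then show ?thesis by (simp add: fab_def x)
qed

lemma bdd_ab:
  shows "bdd_above (fab a b ` (X1 \<union> X2))" "bdd_below (fab a b ` (X1 \<union> X2))"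
proof -
  show "bdd_above (fab a b ` (X1 \<union> X2))"
  proof (rule bdd_aboveI2)
    fix x assume "x \<in> X1 \<union> X2"
    then show "fab a b x \<le> (\<bar>b\<bar> + 2*\<bar>a\<bar> + 1) * 4"
      using fab_abs_bound[of x a b] by linarith
  qed
  show "bdd_below (fab a b ` (X1 \<union> X2))"
  proof (rule bdd_belowI2)
    fix x assume "x \<in> X1 \<union> X2"
    then show "-((\<bar>b\<bar> + 2*\<bar>a\<bar> + 1) * 4) \<le> fab a b x"
      using fab_abs_bound[of x a b] by linarith
  qed
qed

lemma chi_ge: "x \<in> X1 \<union> X2 \<Longrightarrow> fab a b x \<le> chi a b"
  unfolding chi_def by (rule cSUP_upper[OF _ bdd_ab(1)])

lemma mab_le: "x \<in> X1 \<union> X2 \<Longrightarrow> mab a b \<le> fab a b x"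
  unfolding mab_def by (rule cINF_lower[OF bdd_ab(2)])

lemma iden:
  fixes r a t :: real
  assumes hr: "r*r = 10"
  shows "(103-4*r)*((2*a + 2*a*t - t - 3*t^2/4 - a*t + t^2/4)*(2+t))
     - ((34*r-80)*(2*((2*a + 2*a*t - t - 3*t^2/4)-1)) + ((224+8*r)/3)*(a+(2*a + 2*a*t - t - 3*t^2/4))
        + ((352-98*r)/3)*(4*((2*a + 2*a*t - t - 3*t^2/4)-2*a+1)))
     = (103-4*r)*(t-(14-4*r)/9)^2*(a-t/2+(r-8)/9)"
proof -
  have rr: "\<And>x. r * (r * x) = 10 * x" using hr by (metis mult.assoc)
  show ?thesis by (simp add: algebra_simps power2_eq_square rr divide_simps)
qed

theorem propositionA9:
  fixes a b :: real
  assumes "(a, b) \<in> R3"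
  shows "J a b \<ge> (9 + 8 * sqrt 10) / 215"
proof -
  define r where "r = sqrt 10"
  have hr: "r * r = 10" unfolding r_def by simp
  have rlo: "r > 3162/1000" unfolding r_def by (rule real_less_rsqrt) (simp add: power2_eq_square)
  have rhi: "r < 31623/10000" unfolding r_def by (rule real_less_lsqrt) (simp_all add: power2_eq_square)
  define D where "D = (1 - 2*a)^2 - 3*(b - 2*a)"
  define t where "t = tminus a b"
  have A: "mab a b > 0" "D \<ge> 0" "3*(b-2*a) > 0" "0 \<le> t" "t \<le> 2"
    using assms unfolding R3_def Rset_def D_def t_def by auto
  have td: "t = (2*a - 1 - sqrt D) / (3/2)" unfolding t_def tminus_def D_def by simp
  have sq: "sqrt D = 2*a - 1 - 3*t/2" using td by simp
  have sqnn: "sqrt D \<ge> 0" using A(2) by simp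
  have "D = (sqrt D)^2" using A(2) by simp
  also have "\<dots> = (2*a - 1 - 3*t/2)^2" using sq by simp
  finally have "D = (2*a - 1 - 3*t/2)^2" .
  then have hb: "b = 2*a + 2*a*t - t - 3*t^2/4"
    unfolding D_def by (simp add: power2_eq_square algebra_simps)
  have ha: "a \<ge> 1/2 + 3*t/4" using sq sqnn by linarith
  have p0: "(-t/2, -t/2) \<in> X1 \<union> X2" using A(4,5) unfolding X2_def by auto
  have hch: "(b - a*t + t^2/4)*(2+t) \<le> chi a b"
    using chi_ge[OF p0, of a b] by (simp add: fab_def power2_eq_square algebra_simps)
  have p1: "(-1, 1) \<in> X1 \<union> X2" unfolding X1_def by auto
  have p2: "(0, 1) \<in> X1 \<union> X2" unfolding X1_def by auto
  have p3: "(-1, -1) \<in> X1 \<union> X2" unfolding X2_def by auto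
  have m1: "mab a b \<le> 2*(b-1)" using mab_le[OF p1, of a b] by (simp add: fab_def)
  have m2: "mab a b \<le> a+b" using mab_le[OF p2, of a b] by (simp add: fab_def)
  have m3: "mab a b \<le> 4*(b-2*a+1)" using mab_le[OF p3, of a b] by (simp add: fab_def)
  define h where "h = (b - a*t + t^2/4)*(2+t)"
  have key: "(112+4*r) * mab a b \<le> (103-4*r) * h"
  proof (cases "a \<ge> t/2 + (54/100)")
    case True
    have mu: "34*r-80 \<ge> 0" "(224+8*r)/3 \<ge> 0" "(352-98*r)/3 \<ge> 0" using rlo rhi by auto
    have "(112+4*r) * mab a b = (34*r-80)*mab a b + ((224+8*r)/3)*mab a b + ((352-98*r)/3)*mab a b"
      by (simp add: field_simps)
    also have "\<dots> \<le> (34*r-80)*(2*(b-1)) + ((224+8*r)/3)*(a+b) + ((352-98*r)/3)*(4*(b-2*a+1))"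
      by (intro add_mono mult_left_mono m1 m2 m3 mu)
    also have "\<dots> = (103-4*r)*h - (103-4*r)*(t-(14-4*r)/9)^2*(a-t/2+(r-8)/9)"
      using iden[OF hr, of a t] unfolding h_def hb by (simp add: algebra_simps)
    also have "\<dots> \<le> (103-4*r)*h"
    proof -
      have "(103-4*r)*(t-(14-4*r)/9)^2*(a-t/2+(r-8)/9) \<ge> 0"
      proof -
        have "103-4*r \<ge> 0" using rhi by linarith
        moreover have "(r-8)/9 \<ge> -(54/100)" using rlo by (simp add: field_simps)
        then have "a-t/2+(r-8)/9 \<ge> 0" using True by linarith
        ultimately show ?thesis by simp
      qed
      then show ?thesis by linarith
    qed
    finally show ?thesis .
  next
    case False
    have tsm: "t \<le> (16/100)" using False ha by linarith
    have hh: "h = (2+t)^2*(a-t/2)" unfolding h_def hb by (simp add: power2_eq_square algebra_simps)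
    have "(2+t)^2 \<ge> 4" using A(4) by (simp add: power2_eq_square algebra_simps)
    moreover have "a - t/2 \<ge> 0" using ha A(4) by linarith
    ultimately have "h \<ge> 4*(a-t/2)" unfolding hh by (intro mult_right_mono) auto
    then have hlo: "h \<ge> 2" using ha A(4) by (simp add: field_simps)
    have "2*(b-1) = 4*a*(1+t) - 2*t - 3*t^2/2 - 2" unfolding hb by (simp add: algebra_simps)
    also have "\<dots> \<le> 4*a*(1+t) - 2"
    proof -
      have "t^2 \<ge> 0" by simp
      then show ?thesis using A(4) by linarith
    qed
    also have "\<dots> \<le> 4*((16/100)/2+(54/100))*(1+(16/100)) - 2"
    proof -
      have "a*(1+t) \<le> ((16/100)/2+(54/100))*(1+(16/100))"
        using False tsm A(4) ha by (intro mult_mono) auto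
      then show ?thesis by linarith
    qed
    finally have L1: "2*(b-1) \<le> (8768/10000)" by simp
    have "(112+4*r) * mab a b \<le> (112+4*r) * (8768/10000)"
      using m1 L1 rlo by (intro mult_left_mono) auto
    also have "\<dots> \<le> (103-4*r) * 2" using rlo rhi by simp
    also have "\<dots> \<le> (103-4*r) * h" using hlo rhi by (intro mult_left_mono) auto
    finally show ?thesis .
  qed
  have chpos: "chi a b \<ge> h" using hch unfolding h_def .
  have hpos: "h > 0"
  proof -
    have "(112+4*r) * mab a b > 0" using A(1) rlo by simp
    then have "(103-4*r) * h > 0" using key by linarith
    then show ?thesis using rhi by (simp add: zero_less_mult_iff)
  qed
  have cm: "chi a b > 0" using hpos chpos by linarith
  have ss: "chi a b + mab a b > 0" using A(1) cm by linarith
  have fin: "(112+4*r) * mab a b \<le> (103-4*r) * chi a b"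
  proof -
    have "(103-4*r) * h \<le> (103-4*r) * chi a b" using chpos rhi by (intro mult_left_mono) auto
    then show ?thesis using key by linarith
  qed
  show ?thesis
    unfolding J_def r_def[symmetric] using ss fin
    by (simp add: divide_simps algebra_simps)
qed

end
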